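(* Suppose there exists a $(v,k;r)$-MOHS $\{\mathcal P_1,\dots,\mathcal P_r\}$ over an abelian group $G$ of order $2v+1$ in which every block of every $\mathcal P_i$ admits an ordering $(b_0,\dots,b_{k-1})$ whose partial sums $b_0,b_0+b_1,\dots,b_0+\dots+b_{k-1}$ are pairwise distinct. Then there exist $r$ pairwise orthogonal $k$-cycle systems of order $2v+1$.
   Context: A half-set of an abelian group $G$ of odd order $2v+1\ge7$ is a subset $V\subseteq G\setminus\{0\}$ containing exactly one element of each pair $\{g,-g\}$, $g\ne0$. A $(v,k)$ Heffter system on $V$ is a partition of $V$ into blocks of size $k$ each summing to $0$ in $G$. Two Heffter systems on the same half-set are orthogonal if every block of one meets every block of the other in at most one element; a $(v,k;r)$-MOHS is a set of $r$ pairwise orthogonal $(v,k)$ Heffter systems on a common half-set. A $k$-cycle $(x_0,\dots,x_{k-1})$ on distinct vertices has edges $\{x_i,x_{i+1}\}$ (indices mod $k$). A $k$-cycle system of order $m$ is a set of $k$-cycles whose edge sets partition the edges of $K_m$; two such systems on the same vertex set are orthogonal if every cycle of one shares at most one edge with every cycle of the other. *)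

theory Defs
  imports Main
begin

definition half_set :: "'g::ab_group_add set \<Rightarrow> bool" where
  "half_set V \<longleftrightarrow> 0 \<notin> V \<and> (\<forall>g. g \<noteq> 0 \<longrightarrow> (g \<in> V \<longleftrightarrow> - g \<notin> V))"

definition heffter_system :: "nat \<Rightarrow> 'g::ab_group_add set \<Rightarrow> 'g set set \<Rightarrow> bool" where
  "heffter_system k V P \<longleftrightarrow>
     \<Union>P = V \<and> (\<forall>A\<in>P. \<forall>B\<in>P. A \<noteq> B \<longrightarrow> A \<inter> B = {}) \<and>
     (\<forall>B\<in>P. finite B \<and> card B = k \<and> \<Sum>B = 0)"

definition orthogonal_hs :: "'g set set \<Rightarrow> 'g set set \<Rightarrow> bool" where
  "orthogonal_hs P Q \<longleftrightarrow> (\<forall>A\<in>P. \<forall>B\<in>Q. card (A \<inter> B) \<le> 1)"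

definition MOHS :: "nat \<Rightarrow> nat \<Rightarrow> nat \<Rightarrow> 'g::{ab_group_add,finite} set \<Rightarrow> (nat \<Rightarrow> 'g set set) \<Rightarrow> bool" where
  "MOHS v k r V P \<longleftrightarrow> card (UNIV :: 'g set) = 2 * v + 1 \<and> half_set V \<and>
     (\<forall>i<r. heffter_system k V (P i)) \<and>
     (\<forall>i<r. \<forall>j<r. i \<noteq> j \<longrightarrow> orthogonal_hs (P i) (P j))"

definition has_distinct_partial_sums_ordering :: "'g::ab_group_add set \<Rightarrow> bool" where
  "has_distinct_partial_sums_ordering B \<longleftrightarrow>
     (\<exists>bs. distinct bs \<and> set bs = B \<and>
        distinct (map (\<lambda>j. sum_list (take (Suc j) bs)) [0..<length bs]))"

definition cycle_edges :: "'a list \<Rightarrow> 'a set set" where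
  "cycle_edges xs = {{xs ! i, xs ! ((i + 1) mod length xs)} | i. i < length xs}"

definition complete_graph_edges :: "'a set \<Rightarrow> 'a set set" where
  "complete_graph_edges W = {{x, y} | x y. x \<in> W \<and> y \<in> W \<and> x \<noteq> y}"

definition cycle_system :: "nat \<Rightarrow> 'a set \<Rightarrow> 'a list set \<Rightarrow> bool" where
  "cycle_system k W C \<longleftrightarrow>
     (\<forall>c\<in>C. length c = k \<and> distinct c \<and> set c \<subseteq> W) \<and>
     (\<forall>c\<in>C. \<forall>d\<in>C. c \<noteq> d \<longrightarrow> cycle_edges c \<inter> cycle_edges d = {}) \<and>
     \<Union>(cycle_edges ` C) = complete_graph_edges W"

definition orthogonal_cs :: "'a list set \<Rightarrow> 'a list set \<Rightarrow> bool" where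
  "orthogonal_cs C D \<longleftrightarrow> (\<forall>c\<in>C. \<forall>d\<in>D. card (cycle_edges c \<inter> cycle_edges d) \<le> 1)"

end

theory Submission
  imports Defs
begin


lemma modlt: "i < (n::nat) \<Longrightarrow> k mod n < n"
  by simp

lemma ce_img: "cycle_edges xs = (\<lambda>i. {xs ! i, xs ! ((i + 1) mod length xs)}) ` {i. i < length xs}"
  unfolding cycle_edges_def setcompr_eq_image ..

lemma cycle_edges_map: "cycle_edges (map f xs) = (`) f ` cycle_edges xs"
proof -
  have "cycle_edges (map f xs) = (\<lambda>i. (`) f {xs ! i, xs ! ((i + 1) mod length xs)}) ` {i. i < length xs}"
    unfolding ce_img length_map
  proof (rule image_cong[OF refl])
    fix i assume "i \<in> {i. i < length xs}"
    then have i: "i < length xs" by simp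
    then have "(i+1) mod length xs < length xs" by (rule modlt)
    then show "{map f xs ! i, map f xs ! ((i + 1) mod length xs)} = (`) f {xs ! i, xs ! ((i + 1) mod length xs)}"
      using i by simp
  qed
  then show ?thesis unfolding ce_img[of xs] by (simp add: image_image)
qed

lemma inj_img: "inj f \<Longrightarrow> inj ((`) f)"
  by (simp add: inj_def inj_image_eq_iff)

lemma cge_map: assumes f: "inj f"
  shows "complete_graph_edges (f ` W) = (`) f ` complete_graph_edges W"
proof (rule set_eqI, rule iffI)
  fix e assume "e \<in> complete_graph_edges (f ` W)"
  then obtain a b where ab: "e = {a,b}" "a \<in> f ` W" "b \<in> f ` W" "a \<noteq> b"
    unfolding complete_graph_edges_def by blast
  then obtain x y where xy: "a = f x" "b = f y" "x \<in> W" "y \<in> W" by blast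
  then have "{x,y} \<in> complete_graph_edges W" using ab unfolding complete_graph_edges_def by blast
  moreover have "e = f ` {x,y}" using ab xy by simp
  ultimately show "e \<in> (`) f ` complete_graph_edges W" by blast
next
  fix e assume "e \<in> (`) f ` complete_graph_edges W"
  then obtain x y where xy: "x \<in> W" "y \<in> W" "x \<noteq> y" "e = f ` {x, y}"
    unfolding complete_graph_edges_def by blast
  then have "f x \<noteq> f y" using f by (simp add: inj_eq)
  then show "e \<in> complete_graph_edges (f ` W)" using xy unfolding complete_graph_edges_def by blast
qed

lemma orth_map: assumes "inj f" "orthogonal_cs C D"
  shows "orthogonal_cs (map f ` C) (map f ` D)"
  unfolding orthogonal_cs_def
proof (intro ballI)
  fix c' d' assume "c' \<in> map f ` C" "d' \<in> map f ` D"
  then obtain c d where cd: "c \<in> C" "d \<in> D" "c' = map f c" "d' = map f d" by auto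
  have "cycle_edges c' \<inter> cycle_edges d' = (`) f ` (cycle_edges c \<inter> cycle_edges d)"
    using cd inj_img[OF assms(1)] by (simp add: cycle_edges_map image_Int)
  also have "card \<dots> = card (cycle_edges c \<inter> cycle_edges d)"
    by (rule card_image) (meson inj_img[OF assms(1)] inj_on_subset subset_UNIV)
  finally show "card (cycle_edges c' \<inter> cycle_edges d') \<le> 1"
    using assms(2) cd unfolding orthogonal_cs_def by auto
qed

lemma cs_map: assumes "inj f" "cycle_system k UNIV C"
  shows "cycle_system k (range f) (map f ` C)"
proof -
  have i: "inj ((`) f)" using inj_img[OF assms(1)] .
  have a: "\<forall>c\<in>map f ` C. length c = k \<and> distinct c \<and> set c \<subseteq> range f"
  proof
    fix c' assume "c' \<in> map f ` C"
    then obtain c where c: "c \<in> C" "c' = map f c" by blast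
    have "length c = k \<and> distinct c" using assms(2) c(1) unfolding cycle_system_def by blast
    moreover have "inj_on f (set c)" using assms(1) by (rule inj_on_subset) simp
    ultimately show "length c' = k \<and> distinct c' \<and> set c' \<subseteq> range f"
      using c(2) by (simp add: distinct_map image_subsetI)
  qed
  have b: "\<forall>c\<in>map f ` C. \<forall>d\<in>map f ` C. c \<noteq> d \<longrightarrow> cycle_edges c \<inter> cycle_edges d = {}"
  proof (intro ballI impI)
    fix c' d' assume "c' \<in> map f ` C" "d' \<in> map f ` C" "c' \<noteq> d'"
    then obtain c d where cd: "c \<in> C" "d \<in> C" "c' = map f c" "d' = map f d" "c \<noteq> d" by auto
    have "cycle_edges c' \<inter> cycle_edges d' = (`) f ` (cycle_edges c \<inter> cycle_edges d)"
      using cd i by (simp add: cycle_edges_map image_Int)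
    then show "cycle_edges c' \<inter> cycle_edges d' = {}"
      using assms(2) cd unfolding cycle_system_def by auto
  qed
  have "\<Union>(cycle_edges ` map f ` C) = (`) f ` \<Union>(cycle_edges ` C)"
    by (auto simp: cycle_edges_map)
  also have "\<dots> = complete_graph_edges (range f)"
    using assms unfolding cycle_system_def by (simp add: cge_map)
  finally show ?thesis using a b unfolding cycle_system_def by blast
qed


definition cyc :: "'g::ab_group_add list \<Rightarrow> 'g \<Rightarrow> 'g list" where
  "cyc bs g = map (\<lambda>j. g + sum_list (take (Suc j) bs)) [0..<length bs]"

lemma cyc_len[simp]: "length (cyc bs g) = length bs"
  by (simp add: cyc_def)

lemma cyc_nth: "j < length bs \<Longrightarrow> cyc bs g ! j = g + sum_list (take (Suc j) bs)"
  by (simp add: cyc_def)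

lemma cyc_step:
  assumes "sum_list bs = 0" "i < length bs"
  shows "cyc bs g ! ((i+1) mod length bs) = cyc bs g ! i + bs ! ((i+1) mod length bs)"
proof (cases "i + 1 < length bs")
  case True
  then have "take (Suc (Suc i)) bs = take (Suc i) bs @ [bs ! Suc i]"
    by (simp add: take_Suc_conv_app_nth)
  then show ?thesis using True assms by (simp add: cyc_nth algebra_simps)
next
  case False
  then have n: "length bs = Suc i" using assms by simp
  have "take (Suc 0) bs = [bs ! 0]" using n by (simp add: take_Suc_conv_app_nth)
  moreover have "take (Suc i) bs = bs" using n by simp
  ultimately show ?thesis using n assms by (simp add: cyc_nth)
qed

lemma idx_eq:
  assumes "i < (n::nat)" "j < n" "(i+1) mod n = (j+1) mod n" shows "i = j"
  using assms by (simp add: mod_Suc split: if_splits)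

definition lab :: "'g::ab_group_add set \<Rightarrow> 'g set \<Rightarrow> 'g" where
  "lab V e = (THE b. b \<in> V \<and> (\<exists>x y. e = {x,y} \<and> b = y - x))"

lemma hs0: assumes "half_set V" shows "0 \<notin> V"
  using assms unfolding half_set_def by (rule conjunct1)

lemma hsall: assumes "half_set V" "g \<noteq> 0" shows "g \<in> V \<longleftrightarrow> - g \<notin> V"
proof -
  have "\<forall>g. g \<noteq> 0 \<longrightarrow> (g \<in> V \<longleftrightarrow> - g \<notin> V)"
    using assms(1) unfolding half_set_def by (rule conjunct2)
  then have "g \<noteq> 0 \<longrightarrow> (g \<in> V \<longleftrightarrow> - g \<notin> V)" by (rule spec)
  then show ?thesis using assms(2) by (rule mp)
qed

lemma hsneg: assumes "half_set V" "b \<in> V" shows "- b \<notin> V"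
proof -
  have "b \<noteq> 0" using hs0[OF assms(1)] assms(2) by metis
  then show ?thesis using hsall[OF assms(1)] assms(2) by blast
qed

lemma hsone: assumes "half_set V" "d \<noteq> 0" "d \<notin> V" shows "- d \<in> V"
  using hsall[OF assms(1,2)] assms(3) by blast


lemma lab_eq:
  assumes "half_set V" "y - x \<in> V"
  shows "lab V {x,y} = y - x"
  unfolding lab_def
proof (rule the_equality)
  show "y - x \<in> V \<and> (\<exists>x' y'. {x, y} = {x', y'} \<and> y - x = y' - x')"
    using assms by blast
next
  fix b assume b: "b \<in> V \<and> (\<exists>x' y'. {x, y} = {x', y'} \<and> b = y' - x')"
  then obtain x' y' where e: "{x, y} = {x', y'}" "b = y' - x'" by blast
  from e(1) have "(x = x' \<and> y = y') \<or> (x = y' \<and> y = x')" by (simp add: doubleton_eq_iff)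
  then show "b = y - x"
  proof
    assume "x = y' \<and> y = x'"
    then have "b = - (y - x)" using e by simp
    then have False using b hsneg[OF assms] by simp
    then show ?thesis ..
  qed (use e in simp)
qed

lemma edges_cyc:
  "e \<in> cycle_edges (cyc bs g) \<longleftrightarrow>
    (\<exists>i<length bs. e = {cyc bs g ! i, cyc bs g ! ((i+1) mod length bs)})"
  unfolding cycle_edges_def by auto

lemma cyc_edge_lab:
  assumes "half_set V" "set bs \<subseteq> V" "sum_list bs = 0" "i < length bs"
  shows "lab V {cyc bs g ! i, cyc bs g ! ((i+1) mod length bs)} = bs ! ((i+1) mod length bs)"
proof -
  have m: "(i+1) mod length bs < length bs" using modlt[OF assms(4)] .
  then have "bs ! ((i+1) mod length bs) \<in> V" using assms(2) nth_mem by blast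
  then show ?thesis using cyc_step[OF assms(3,4), of g] lab_eq[OF assms(1)] by simp
qed

lemma lab_in:
  assumes "half_set V" "set bs \<subseteq> V" "sum_list bs = 0" "e \<in> cycle_edges (cyc bs g)"
  shows "lab V e \<in> set bs"
proof -
  obtain i where i: "i < length bs" "e = {cyc bs g ! i, cyc bs g ! ((i+1) mod length bs)}"
    using assms(4) edges_cyc by blast
  have "(i+1) mod length bs < length bs" using modlt[OF i(1)] .
  then show ?thesis using cyc_edge_lab[OF assms(1-3) i(1)] i(2) by simp
qed

lemma lab_idx:
  assumes "half_set V" "set bs \<subseteq> V" "sum_list bs = 0" "distinct bs"
    "i < length bs" "j < length bs"
    "lab V {cyc bs g ! i, cyc bs g ! ((i+1) mod length bs)} = lab V {cyc bs h ! j, cyc bs h ! ((j+1) mod length bs)}"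
  shows "i = j"
proof -
  have "bs ! ((i+1) mod length bs) = bs ! ((j+1) mod length bs)"
    using assms(7) cyc_edge_lab[OF assms(1-3) assms(5), of g] cyc_edge_lab[OF assms(1-3) assms(6), of h]
    by simp
  moreover have "(i+1) mod length bs < length bs" "(j+1) mod length bs < length bs" using modlt[OF assms(5)] modlt[OF assms(6)] by auto
  ultimately have "(i+1) mod length bs = (j+1) mod length bs"
    using assms(4) nth_eq_iff_index_eq by blast
  then show ?thesis using idx_eq assms(5,6) by blast
qed

lemma lab_inj:
  assumes "half_set V" "set bs \<subseteq> V" "sum_list bs = 0" "distinct bs"
  shows "inj_on (lab V) (cycle_edges (cyc bs g))"
proof (rule inj_onI)
  fix e1 e2 assume e: "e1 \<in> cycle_edges (cyc bs g)" "e2 \<in> cycle_edges (cyc bs g)" "lab V e1 = lab V e2"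
  obtain i where i: "i < length bs" "e1 = {cyc bs g ! i, cyc bs g ! ((i+1) mod length bs)}"
    using e(1) edges_cyc by blast
  obtain j where j: "j < length bs" "e2 = {cyc bs g ! j, cyc bs g ! ((j+1) mod length bs)}"
    using e(2) edges_cyc by blast
  have "i = j" using lab_idx[OF assms i(1) j(1)] e(3) i(2) j(2) by simp
  then show "e1 = e2" using i j by simp
qed

lemma cyc_distinct:
  assumes "distinct (map (\<lambda>j. sum_list (take (Suc j) bs)) [0..<length bs])"
  shows "distinct (cyc bs g)"
proof -
  have "cyc bs g = map ((+) g) (map (\<lambda>j. sum_list (take (Suc j) bs)) [0..<length bs])"
    by (simp add: cyc_def)
  then show ?thesis using assms by (simp add: distinct_map inj_on_def)
qed

lemma cyc_same:
  assumes "half_set V" "set bs \<subseteq> V" "sum_list bs = 0" "distinct bs"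
    "e \<in> cycle_edges (cyc bs g)" "e \<in> cycle_edges (cyc bs h)"
  shows "g = h"
proof -
  obtain i where i: "i < length bs" "e = {cyc bs g ! i, cyc bs g ! ((i+1) mod length bs)}"
    using assms(5) edges_cyc by blast
  obtain j where j: "j < length bs" "e = {cyc bs h ! j, cyc bs h ! ((j+1) mod length bs)}"
    using assms(6) edges_cyc by blast
  have ij: "i = j" using lab_idx[OF assms(1-4) i(1) j(1), of g h] i(2) j(2) by simp
  define b where "b = bs ! ((i+1) mod length bs)"
  have bV: "b \<in> V" unfolding b_def using modlt[OF i(1)] assms(2) nth_mem by blast
  define p where "p = cyc bs g ! i"
  define q where "q = cyc bs h ! i"
  have e1: "e = {p, p + b}"
    using i(2) cyc_step[OF assms(3) i(1), of g] unfolding p_def b_def by simp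
  have e2: "e = {q, q + b}"
    using j(2) ij cyc_step[OF assms(3) i(1), of h] unfolding q_def b_def by simp
  have "{p, p + b} = {q, q + b}" using e1 e2 by simp
  then have "(p = q) \<or> (p = q + b \<and> p + b = q)" by (auto simp: doubleton_eq_iff)
  then show ?thesis
  proof
    assume "p = q" then show ?thesis unfolding p_def q_def using i(1) by (simp add: cyc_nth)
  next
    assume h: "p = q + b \<and> p + b = q"
    have "b + b = 0" using h by (auto simp: algebra_simps)
    then have "- b = b" by (metis add_eq_0_iff)
    then show ?thesis using hsneg[OF assms(1) bV] bV by simp
  qed
qed

lemma cyc_cover:
  assumes "half_set V" "set bs \<subseteq> V" "sum_list bs = 0" "b \<in> set bs" "y - x = b"
  shows "\<exists>g. {x,y} \<in> cycle_edges (cyc bs g)"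
proof -
  let ?n = "length bs"
  obtain m where m: "m < ?n" "bs ! m = b" using assms(4) by (metis in_set_conv_nth)
  define j where "j = (m + ?n - 1) mod ?n"
  have j: "j < ?n" using modlt[OF m(1)] unfolding j_def by simp
  have jm: "(j+1) mod ?n = m"
  proof (cases m)
    case 0 then show ?thesis using m unfolding j_def by simp
  next
    case (Suc m') then show ?thesis using m unfolding j_def by simp
  qed
  define g where "g = x - sum_list (take (Suc j) bs)"
  have cx: "cyc bs g ! j = x" using j by (simp add: cyc_nth g_def)
  have cy: "cyc bs g ! ((j+1) mod ?n) = y"
    using cyc_step[OF assms(3) j, of g] cx jm m assms(5) by (simp add: algebra_simps)
  have "{x,y} \<in> cycle_edges (cyc bs g)" using edges_cyc j cx cy by metis
  then show ?thesis ..
qed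

lemma cyc_edge_ne:
  assumes "half_set V" "set bs \<subseteq> V" "sum_list bs = 0" "e \<in> cycle_edges (cyc bs g)"
  shows "e \<in> complete_graph_edges UNIV"
proof -
  obtain i where i: "i < length bs" "e = {cyc bs g ! i, cyc bs g ! ((i+1) mod length bs)}"
    using assms(4) edges_cyc by blast
  have "bs ! ((i+1) mod length bs) \<in> V" using modlt[OF i(1)] assms(2) nth_mem by blast
  then have "bs ! ((i+1) mod length bs) \<noteq> 0" using hs0[OF assms(1)] by auto
  then have "cyc bs g ! i \<noteq> cyc bs g ! ((i+1) mod length bs)"
    using cyc_step[OF assms(3) i(1), of g] by simp
  then show ?thesis using i(2) unfolding complete_graph_edges_def by blast
qed



theorem proposition6p4:
  fixes v k r :: nat and V :: "'g::{ab_group_add,finite} set" and P :: "nat \<Rightarrow> 'g set set"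
  assumes "v \<ge> 3"
    and "MOHS v k r V P"
    and "\<forall>i<r. \<forall>B\<in>P i. has_distinct_partial_sums_ordering B"
  shows "\<exists>C :: nat \<Rightarrow> nat list set.
           (\<forall>i<r. cycle_system k {0..<2 * v + 1} (C i)) \<and>
           (\<forall>i<r. \<forall>j<r. i \<noteq> j \<longrightarrow> orthogonal_cs (C i) (C j))"
proof -
  have cardG: "card (UNIV::'g set) = 2*v+1" and hs: "half_set V"
    and hef: "\<forall>i<r. heffter_system k V (P i)"
    and orth: "\<forall>i<r. \<forall>j<r. i \<noteq> j \<longrightarrow> orthogonal_hs (P i) (P j)"
    using assms(2) unfolding MOHS_def by blast+
  define ord where "ord B = (SOME bs. distinct bs \<and> set bs = B \<and>
        distinct (map (\<lambda>j. sum_list (take (Suc j) bs)) [0..<length bs]))" for B :: "'g set"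
  have ordp: "distinct (ord B) \<and> set (ord B) = B \<and>
        distinct (map (\<lambda>j. sum_list (take (Suc j) (ord B))) [0..<length (ord B)])"
    if "i < r" "B \<in> P i" for i B
  proof -
    have "has_distinct_partial_sums_ordering B" using assms(3) that by blast
    then have "\<exists>bs. distinct bs \<and> set bs = B \<and>
        distinct (map (\<lambda>j. sum_list (take (Suc j) bs)) [0..<length bs])"
      unfolding has_distinct_partial_sums_ordering_def .
    then show ?thesis unfolding ord_def by (rule someI_ex)
  qed
  have blk: "set (ord B) \<subseteq> V \<and> sum_list (ord B) = 0 \<and> length (ord B) = k \<and> distinct (ord B)"
    if "i < r" "B \<in> P i" for i B
  proof -
    have h: "heffter_system k V (P i)" using hef that(1) by blast
    have o: "distinct (ord B)" "set (ord B) = B" using ordp[OF that] by blast+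
    have "B \<subseteq> V" using h that(2) unfolding heffter_system_def by blast
    moreover have "card B = k" "\<Sum>B = 0" using h that(2) unfolding heffter_system_def by blast+
    moreover have "sum_list (ord B) = \<Sum>(set (ord B))"
      using sum_list_distinct_conv_sum_set[OF o(1), of id] by simp
    moreover have "length (ord B) = card (set (ord B))" using distinct_card[OF o(1)] by simp
    ultimately show ?thesis using o by simp
  qed
  define Ci where "Ci i = {cyc (ord B) g | B g. B \<in> P i}" for i
  have memCi: "c \<in> Ci i \<longleftrightarrow> (\<exists>B\<in>P i. \<exists>g. c = cyc (ord B) g)" for c i
    unfolding Ci_def by blast
  have cs: "cycle_system k UNIV (Ci i)" if ir: "i < r" for i
  proof -
    have p1: "\<forall>c\<in>Ci i. length c = k \<and> distinct c \<and> set c \<subseteq> UNIV"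
    proof
      fix c assume "c \<in> Ci i"
      then obtain B g where B: "B \<in> P i" "c = cyc (ord B) g" using memCi by blast
      have "distinct (cyc (ord B) g)" using ordp[OF ir B(1)] by (intro cyc_distinct) blast
      then show "length c = k \<and> distinct c \<and> set c \<subseteq> UNIV"
        using blk[OF ir B(1)] B(2) by simp
    qed
    have p2: "\<forall>c\<in>Ci i. \<forall>d\<in>Ci i. c \<noteq> d \<longrightarrow> cycle_edges c \<inter> cycle_edges d = {}"
    proof (intro ballI impI)
      fix c d assume cd: "c \<in> Ci i" "d \<in> Ci i" "c \<noteq> d"
      obtain A g where A: "A \<in> P i" "c = cyc (ord A) g" using memCi cd(1) by blast
      obtain B h where B: "B \<in> P i" "d = cyc (ord B) h" using memCi cd(2) by blast
      show "cycle_edges c \<inter> cycle_edges d = {}"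
      proof (rule ccontr)
        assume "cycle_edges c \<inter> cycle_edges d \<noteq> {}"
        then obtain e where e: "e \<in> cycle_edges c" "e \<in> cycle_edges d" by blast
        have bA: "set (ord A) \<subseteq> V" "sum_list (ord A) = 0" "distinct (ord A)" "set (ord A) = A"
          using blk[OF ir A(1)] ordp[OF ir A(1)] by blast+
        have bB: "set (ord B) \<subseteq> V" "sum_list (ord B) = 0" "set (ord B) = B"
          using blk[OF ir B(1)] ordp[OF ir B(1)] by blast+
        have "lab V e \<in> A" using lab_in[OF hs bA(1,2)] e(1) A(2) bA(4) by blast
        moreover have "lab V e \<in> B" using lab_in[OF hs bB(1,2)] e(2) B(2) bB(3) by blast
        moreover have "A \<noteq> B \<longrightarrow> A \<inter> B = {}"
          using hef ir A(1) B(1) unfolding heffter_system_def by blast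
        ultimately have AB: "A = B" by blast
        have "g = h" using cyc_same[OF hs bA(1-3)] e A(2) B(2) AB by blast
        then show False using cd(3) A(2) B(2) AB by simp
      qed
    qed
    have cov: "{x,y} \<in> \<Union>(cycle_edges ` Ci i)" if yx: "y - x \<in> V" for x y
    proof -
      have hi: "heffter_system k V (P i)" using hef ir by blast
      have "\<Union>(P i) = V" using hi unfolding heffter_system_def by (rule conjunct1)
      then have "y - x \<in> \<Union>(P i)" using yx by simp
      then obtain B where B: "B \<in> P i" "y - x \<in> B" by (rule UnionE)
      have bB: "set (ord B) \<subseteq> V" "sum_list (ord B) = 0" "set (ord B) = B"
        using blk[OF ir B(1)] ordp[OF ir B(1)] by blast+
      obtain g where "{x,y} \<in> cycle_edges (cyc (ord B) g)"
        using cyc_cover[OF hs bB(1,2), of "y - x" y x] B(2) bB(3) by blast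
      moreover have "cyc (ord B) g \<in> Ci i" using memCi B(1) by blast
      ultimately show ?thesis by blast
    qed
    have p3: "\<Union>(cycle_edges ` Ci i) = complete_graph_edges UNIV"
    proof
      show "\<Union>(cycle_edges ` Ci i) \<subseteq> complete_graph_edges UNIV"
      proof
        fix e assume "e \<in> \<Union>(cycle_edges ` Ci i)"
        then obtain c where c: "c \<in> Ci i" "e \<in> cycle_edges c" by blast
        then obtain B g where B: "B \<in> P i" "c = cyc (ord B) g" using memCi by blast
        have bB: "set (ord B) \<subseteq> V" "sum_list (ord B) = 0"
          using blk[OF ir B(1)] by blast+
        show "e \<in> complete_graph_edges UNIV" using cyc_edge_ne[OF hs bB] c(2) B(2) by blast
      qed
    next
      show "complete_graph_edges UNIV \<subseteq> \<Union>(cycle_edges ` Ci i)"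
      proof
        fix e assume "e \<in> complete_graph_edges (UNIV::'g set)"
        then obtain x y :: 'g where xy: "e = {x,y}" "x \<noteq> y"
          unfolding complete_graph_edges_def by blast
        show "e \<in> \<Union>(cycle_edges ` Ci i)"
        proof (cases "y - x \<in> V")
          case True then show ?thesis using cov xy(1) by blast
        next
          case False
          have "y - x \<noteq> 0" using xy(2) by simp
          then have "- (y - x) \<in> V" using hsone[OF hs _ False] by blast
          then have "x - y \<in> V" by simp
          then have "{y,x} \<in> \<Union>(cycle_edges ` Ci i)" using cov by blast
          then show ?thesis using xy(1) by (simp add: insert_commute)
        qed
      qed
    qed
    show ?thesis unfolding cycle_system_def using p1 p2 p3 by blast
  qed
  have oc: "orthogonal_cs (Ci i) (Ci j)" if ij: "i < r" "j < r" "i \<noteq> j" for i j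
    unfolding orthogonal_cs_def
  proof (intro ballI)
    fix c d assume cd: "c \<in> Ci i" "d \<in> Ci j"
    obtain A g where A: "A \<in> P i" "c = cyc (ord A) g" using memCi cd(1) by blast
    obtain B h where B: "B \<in> P j" "d = cyc (ord B) h" using memCi cd(2) by blast
    have bA: "set (ord A) \<subseteq> V" "sum_list (ord A) = 0" "distinct (ord A)" "set (ord A) = A"
      using blk[OF ij(1) A(1)] ordp[OF ij(1) A(1)] by blast+
    have bB: "set (ord B) \<subseteq> V" "sum_list (ord B) = 0" "set (ord B) = B"
      using blk[OF ij(2) B(1)] ordp[OF ij(2) B(1)] by blast+
    have inj: "inj_on (lab V) (cycle_edges c \<inter> cycle_edges d)"
      using lab_inj[OF hs bA(1-3), of g] A(2) by (blast intro: inj_on_subset)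
    have sub: "lab V ` (cycle_edges c \<inter> cycle_edges d) \<subseteq> A \<inter> B"
    proof
      fix x assume "x \<in> lab V ` (cycle_edges c \<inter> cycle_edges d)"
      then obtain e where e: "e \<in> cycle_edges c" "e \<in> cycle_edges d" "x = lab V e" by blast
      have "lab V e \<in> A" using lab_in[OF hs bA(1,2)] e(1) A(2) bA(4) by blast
      moreover have "lab V e \<in> B" using lab_in[OF hs bB(1,2)] e(2) B(2) bB(3) by blast
      ultimately show "x \<in> A \<inter> B" using e(3) by blast
    qed
    have "card (cycle_edges c \<inter> cycle_edges d) = card (lab V ` (cycle_edges c \<inter> cycle_edges d))"
      using card_image[OF inj] by simp
    also have "\<dots> \<le> card (A \<inter> B)" using sub by (rule card_mono[rotated]) simp
    also have "\<dots> \<le> 1" using orth ij A(1) B(1) unfolding orthogonal_hs_def by blast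
    finally show "card (cycle_edges c \<inter> cycle_edges d) \<le> 1" .
  qed
  obtain \<phi> :: "'g \<Rightarrow> nat" where bij: "bij_betw \<phi> (UNIV::'g set) {0..<card (UNIV::'g set)}"
    using ex_bij_betw_finite_nat[of "UNIV::'g set"] by auto
  then have injp: "inj \<phi>" and rng: "range \<phi> = {0..<2*v+1}"
    using cardG unfolding bij_betw_def by auto
  show ?thesis
  proof (intro exI[of _ "\<lambda>i. map \<phi> ` Ci i"] conjI allI impI)
    fix i assume "i < r"
    then show "cycle_system k {0..<2 * v + 1} (map \<phi> ` Ci i)"
      using cs_map[OF injp cs] rng by metis
  next
    fix i j assume "i < r" "j < r" "i \<noteq> j"
    then show "orthogonal_cs (map \<phi> ` Ci i) (map \<phi> ` Ci j)"
      using orth_map[OF injp oc] by blast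
  qed
qed

end
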